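(* Let $\mathcal{O}$ be an operad, $A$ a color of $\mathcal{O}$, and $L\subseteq\mathcal{O}(A)$ a regular language of constants. If $F:\mathcal{O}\to\mathcal{P}$ is a finitary ULF functor of operads, then the image $F(L)\subseteq\mathcal{P}(F(A))$ is a regular language of constants in $\mathcal{P}$.
   Context: Operads are colored, non-symmetric operads; $\mathcal{O}(A)$ denotes the set of constants (nullary operations) of output color $A$. A functor of operads $p:\mathcal{Q}\to\mathcal{O}$ is ULF if for every operation $\alpha$ of $\mathcal{Q}$ and operations $g,h$ of $\mathcal{O}$ and index $i$ with $p(\alpha)=g\circ_i h$ there is a unique pair $\beta,\gamma$ with $\alpha=\beta\circ_i\gamma$, $p(\beta)=g$, $p(\gamma)=h$; it is finitary if its fibers over every color and every operation are finite. A nondeterministic finite-state automaton over $\mathcal{O}$ is a tuple $M=(\mathcal{O},\mathcal{Q},p,q_r)$ with $p:\mathcal{Q}\to\mathcal{O}$ finitary ULF and $q_r$ a color of $\mathcal{Q}$; it recognizes $\{p(\alpha)\mid\alpha\in\mathcal{Q}(q_r)\}\subseteq\mathcal{O}(p(q_r))$. A subset $L\subseteq\mathcal{O}(A)$ is a regular language of constants if it is the language recognized by such an automaton with $p(q_r)=A$. *)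

theory Defs
  imports Main
begin

text \<open>An operad with colors of type 'c and operations of type 'o.
  src f is the list of input colors, tgt f the output color,
  ident c the identity at color c, and comp g i h is the partial composition
  g \<circ>_i h (0-based index i), meaningful when tgt h = src g ! i.\<close>

record ('c, 'o) operad =
  cols  :: "'c set"
  ops   :: "'o set"
  src   :: "'o \<Rightarrow> 'c list"
  tgt   :: "'o \<Rightarrow> 'c"
  ident :: "'c \<Rightarrow> 'o"
  comp  :: "'o \<Rightarrow> nat \<Rightarrow> 'o \<Rightarrow> 'o"

definition composable :: "('c, 'o, 'z) operad_scheme \<Rightarrow> 'o \<Rightarrow> nat \<Rightarrow> 'o \<Rightarrow> bool" where
  "composable Op g i h \<longleftrightarrow> g \<in> ops Op \<and> h \<in> ops Op \<and> i < length (src Op g) \<and> tgt Op h = src Op g ! i"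

definition is_operad :: "('c, 'o, 'z) operad_scheme \<Rightarrow> bool" where
  "is_operad Op \<longleftrightarrow>
     (\<forall>f\<in>ops Op. set (src Op f) \<subseteq> cols Op \<and> tgt Op f \<in> cols Op)
   \<and> (\<forall>c\<in>cols Op. ident Op c \<in> ops Op \<and> src Op (ident Op c) = [c] \<and> tgt Op (ident Op c) = c)
   \<and> (\<forall>g h i. composable Op g i h \<longrightarrow>
         comp Op g i h \<in> ops Op
       \<and> src Op (comp Op g i h) = take i (src Op g) @ src Op h @ drop (Suc i) (src Op g)
       \<and> tgt Op (comp Op g i h) = tgt Op g)
   \<and> (\<forall>h\<in>ops Op. comp Op (ident Op (tgt Op h)) 0 h = h)
   \<and> (\<forall>g\<in>ops Op. \<forall>i < length (src Op g). comp Op g i (ident Op (src Op g ! i)) = g)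
   \<and> (\<forall>f g h i j. composable Op f i g \<and> composable Op g j h \<longrightarrow>
         comp Op (comp Op f i g) (i + j) h = comp Op f i (comp Op g j h))
   \<and> (\<forall>f g h i k. composable Op f i g \<and> composable Op f k h \<and> i < k \<longrightarrow>
         comp Op (comp Op f k h) i g = comp Op (comp Op f i g) (k + length (src Op g) - 1) h)"

definition constants :: "('c, 'o, 'z) operad_scheme \<Rightarrow> 'c \<Rightarrow> 'o set" where
  "constants Op A = {f \<in> ops Op. src Op f = [] \<and> tgt Op f = A}"

definition is_functor ::
  "('c, 'o, 'z1) operad_scheme \<Rightarrow> ('d, 'p, 'z2) operad_scheme \<Rightarrow> ('c \<Rightarrow> 'd) \<Rightarrow> ('o \<Rightarrow> 'p) \<Rightarrow> bool" where
  "is_functor Op P Fc Fo \<longleftrightarrow>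
     Fc ` cols Op \<subseteq> cols P \<and> Fo ` ops Op \<subseteq> ops P
   \<and> (\<forall>f\<in>ops Op. src P (Fo f) = map Fc (src Op f) \<and> tgt P (Fo f) = Fc (tgt Op f))
   \<and> (\<forall>c\<in>cols Op. Fo (ident Op c) = ident P (Fc c))
   \<and> (\<forall>g i h. composable Op g i h \<longrightarrow> Fo (comp Op g i h) = comp P (Fo g) i (Fo h))"

definition is_ULF ::
  "('c, 'o, 'z1) operad_scheme \<Rightarrow> ('d, 'p, 'z2) operad_scheme \<Rightarrow> ('c \<Rightarrow> 'd) \<Rightarrow> ('o \<Rightarrow> 'p) \<Rightarrow> bool" where
  "is_ULF Q Op pc po \<longleftrightarrow> is_functor Q Op pc po \<and>
     (\<forall>\<alpha>\<in>ops Q. \<forall>g h i. composable Op g i h \<and> po \<alpha> = comp Op g i h \<longrightarrow>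
        (\<exists>!(\<beta>, \<gamma>). composable Q \<beta> i \<gamma> \<and> \<alpha> = comp Q \<beta> i \<gamma> \<and> po \<beta> = g \<and> po \<gamma> = h))"

definition is_finitary ::
  "('c, 'o, 'z1) operad_scheme \<Rightarrow> ('d, 'p, 'z2) operad_scheme \<Rightarrow> ('c \<Rightarrow> 'd) \<Rightarrow> ('o \<Rightarrow> 'p) \<Rightarrow> bool" where
  "is_finitary Q Op pc po \<longleftrightarrow> is_functor Q Op pc po \<and>
     (\<forall>c\<in>cols Op. finite {x \<in> cols Q. pc x = c}) \<and>
     (\<forall>f\<in>ops Op. finite {\<alpha> \<in> ops Q. po \<alpha> = f})"

text \<open>Nondeterministic finite-state automaton M = (O, Q, p, q_r) with p = (pc, po).\<close>
definition is_nfa ::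
  "('c, 'o, 'z1) operad_scheme \<Rightarrow> ('qc, 'qo, 'z2) operad_scheme \<Rightarrow> ('qc \<Rightarrow> 'c) \<Rightarrow> ('qo \<Rightarrow> 'o) \<Rightarrow> 'qc \<Rightarrow> bool" where
  "is_nfa Op Q pc po qr \<longleftrightarrow> is_operad Q \<and> is_finitary Q Op pc po \<and> is_ULF Q Op pc po \<and> qr \<in> cols Q"

definition recognized ::
  "('qc, 'qo, 'z2) operad_scheme \<Rightarrow> ('qo \<Rightarrow> 'o) \<Rightarrow> 'qc \<Rightarrow> 'o set" where
  "recognized Q po qr = po ` constants Q qr"

text \<open>L is a regular language of constants of color A in Op, witnessed by an automaton
  whose operad has colors of type 'qc and operations of type 'qo (fixed by the itself argument).\<close>
definition regular_lang ::
  "('qc \<times> 'qo) itself \<Rightarrow> ('c, 'o, 'z) operad_scheme \<Rightarrow> 'c \<Rightarrow> 'o set \<Rightarrow> bool" where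
  "regular_lang (_ :: ('qc \<times> 'qo) itself) Op A L \<longleftrightarrow>
     (\<exists>(Q :: ('qc, 'qo) operad) pc po qr. is_nfa Op Q pc po qr \<and> pc qr = A \<and> L = recognized Q po qr)"

end

theory Submission
  imports Defs
begin

lemma functor_composable:
  assumes "is_functor Q Op pc po" "composable Q g i h"
  shows "composable Op (po g) i (po h)"
  using assms unfolding is_functor_def composable_def by auto

lemma functor_comp:
  assumes "is_functor Q Op pc po" "is_functor Op P Fc Fo"
  shows "is_functor Q P (Fc \<circ> pc) (Fo \<circ> po)"
proof -
  have c: "\<And>g i h. composable Q g i h \<Longrightarrow> composable Op (po g) i (po h)"
    using functor_composable[OF assms(1)] .
  show ?thesis
    using assms unfolding is_functor_def
    apply (intro conjI)
        apply (auto simp: image_subset_iff)[4]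
    apply (metis (no_types, lifting) c assms(1) is_functor_def comp_apply)
    done
qed

lemma finitary_comp:
  assumes "is_finitary Q Op pc po" "is_finitary Op P Fc Fo"
  shows "is_finitary Q P (Fc \<circ> pc) (Fo \<circ> po)"
proof -
  have fQ: "is_functor Q Op pc po" and fO: "is_functor Op P Fc Fo"
    using assms unfolding is_finitary_def by auto
  have cols: "finite {x \<in> cols Q. (Fc \<circ> pc) x = c}" if "c \<in> cols P" for c
  proof -
    have "{x \<in> cols Q. (Fc \<circ> pc) x = c} = (\<Union>y\<in>{y\<in>cols Op. Fc y = c}. {x \<in> cols Q. pc x = y})"
      using fQ unfolding is_functor_def by auto
    moreover have "finite {y\<in>cols Op. Fc y = c}" using assms(2) that unfolding is_finitary_def by auto
    moreover have "\<forall>y\<in>{y\<in>cols Op. Fc y = c}. finite {x \<in> cols Q. pc x = y}"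
      using assms(1) unfolding is_finitary_def by auto
    ultimately show ?thesis by auto
  qed
  have opsf: "finite {x \<in> ops Q. (Fo \<circ> po) x = c}" if "c \<in> ops P" for c
  proof -
    have "{x \<in> ops Q. (Fo \<circ> po) x = c} = (\<Union>y\<in>{y\<in>ops Op. Fo y = c}. {x \<in> ops Q. po x = y})"
      using fQ unfolding is_functor_def by auto
    moreover have "finite {y\<in>ops Op. Fo y = c}" using assms(2) that unfolding is_finitary_def by auto
    moreover have "\<forall>y\<in>{y\<in>ops Op. Fo y = c}. finite {x \<in> ops Q. po x = y}"
      using assms(1) unfolding is_finitary_def by auto
    ultimately show ?thesis by auto
  qed
  show ?thesis unfolding is_finitary_def using functor_comp[OF fQ fO] cols opsf by blast
qed

lemma ULF_comp:
  assumes u1: "is_ULF Q Op pc po" and u2: "is_ULF Op P Fc Fo"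
  shows "is_ULF Q P (Fc \<circ> pc) (Fo \<circ> po)"
proof -
  have fQ: "is_functor Q Op pc po" and fO: "is_functor Op P Fc Fo"
    using assms unfolding is_ULF_def by auto
  have U1: "\<And>\<alpha> g h i. \<alpha> \<in> ops Q \<Longrightarrow> composable Op g i h \<Longrightarrow> po \<alpha> = comp Op g i h \<Longrightarrow>
        (\<exists>!(\<beta>, \<gamma>). composable Q \<beta> i \<gamma> \<and> \<alpha> = comp Q \<beta> i \<gamma> \<and> po \<beta> = g \<and> po \<gamma> = h)"
    using u1 unfolding is_ULF_def by blast
  have U2: "\<And>\<alpha> g h i. \<alpha> \<in> ops Op \<Longrightarrow> composable P g i h \<Longrightarrow> Fo \<alpha> = comp P g i h \<Longrightarrow>
        (\<exists>!(\<beta>, \<gamma>). composable Op \<beta> i \<gamma> \<and> \<alpha> = comp Op \<beta> i \<gamma> \<and> Fo \<beta> = g \<and> Fo \<gamma> = h)"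
    using u2 unfolding is_ULF_def by blast
  have pocomp: "\<And>g i h. composable Q g i h \<Longrightarrow> po (comp Q g i h) = comp Op (po g) i (po h)"
    using fQ unfolding is_functor_def by blast
  have poops: "\<And>a. a \<in> ops Q \<Longrightarrow> po a \<in> ops Op" using fQ unfolding is_functor_def by blast
  have main: "\<exists>!(\<beta>, \<gamma>). composable Q \<beta> i \<gamma> \<and> \<alpha> = comp Q \<beta> i \<gamma> \<and> (Fo \<circ> po) \<beta> = g \<and> (Fo \<circ> po) \<gamma> = h"
    if a: "\<alpha> \<in> ops Q" and c: "composable P g i h" and e: "(Fo \<circ> po) \<alpha> = comp P g i h" for \<alpha> g i h
  proof -
    from U2[OF poops[OF a] c] e have "\<exists>!(\<beta>, \<gamma>). composable Op \<beta> i \<gamma> \<and> po \<alpha> = comp Op \<beta> i \<gamma> \<and> Fo \<beta> = g \<and> Fo \<gamma> = h" by simp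
    then obtain p' where p'1: "case p' of (\<beta>, \<gamma>) \<Rightarrow> composable Op \<beta> i \<gamma> \<and> po \<alpha> = comp Op \<beta> i \<gamma> \<and> Fo \<beta> = g \<and> Fo \<gamma> = h"
      and p'2: "\<And>q. (case q of (\<beta>, \<gamma>) \<Rightarrow> composable Op \<beta> i \<gamma> \<and> po \<alpha> = comp Op \<beta> i \<gamma> \<and> Fo \<beta> = g \<and> Fo \<gamma> = h) \<Longrightarrow> q = p'"
      by (rule ex1E) blast
    obtain b' c' where pp': "p' = (b', c')" by (cases p')
    have bc': "composable Op b' i c'" "po \<alpha> = comp Op b' i c'" "Fo b' = g" "Fo c' = h"
      using p'1 pp' by auto
    have uq': "x = b' \<and> y = c'" if "composable Op x i y \<and> po \<alpha> = comp Op x i y \<and> Fo x = g \<and> Fo y = h" for x y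
      using p'2[of "(x, y)"] that pp' by auto
    from U1[OF a bc'(1,2)] obtain p where p1: "case p of (\<beta>, \<gamma>) \<Rightarrow> composable Q \<beta> i \<gamma> \<and> \<alpha> = comp Q \<beta> i \<gamma> \<and> po \<beta> = b' \<and> po \<gamma> = c'"
      and p2: "\<And>q. (case q of (\<beta>, \<gamma>) \<Rightarrow> composable Q \<beta> i \<gamma> \<and> \<alpha> = comp Q \<beta> i \<gamma> \<and> po \<beta> = b' \<and> po \<gamma> = c') \<Longrightarrow> q = p"
      by (rule ex1E) blast
    obtain b c where pp: "p = (b, c)" by (cases p)
    have bc: "composable Q b i c" "\<alpha> = comp Q b i c" "po b = b'" "po c = c'"
      using p1 pp by auto
    have uq: "x = b \<and> y = c" if "composable Q x i y \<and> \<alpha> = comp Q x i y \<and> po x = b' \<and> po y = c'" for x y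
      using p2[of "(x, y)"] that pp by auto
    show ?thesis
    proof (rule ex1I[of _ "(b, c)"])
      show "case (b, c) of (\<beta>, \<gamma>) \<Rightarrow> composable Q \<beta> i \<gamma> \<and> \<alpha> = comp Q \<beta> i \<gamma> \<and> (Fo \<circ> po) \<beta> = g \<and> (Fo \<circ> po) \<gamma> = h"
        using bc bc' by auto
    next
      fix p assume p: "case p of (\<beta>, \<gamma>) \<Rightarrow> composable Q \<beta> i \<gamma> \<and> \<alpha> = comp Q \<beta> i \<gamma> \<and> (Fo \<circ> po) \<beta> = g \<and> (Fo \<circ> po) \<gamma> = h"
      obtain x y where pxy: "p = (x, y)" by (cases p)
      with p have h1: "composable Q x i y" "\<alpha> = comp Q x i y" "Fo (po x) = g" "Fo (po y) = h" by auto
      have "composable Op (po x) i (po y)" using functor_composable[OF fQ h1(1)] .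
      moreover have "po \<alpha> = comp Op (po x) i (po y)" using h1 pocomp by auto
      ultimately have "po x = b' \<and> po y = c'" using uq' h1 by blast
      then have "x = b \<and> y = c" using uq h1 by blast
      then show "p = (b, c)" using pxy by simp
    qed
  qed
  show ?thesis unfolding is_ULF_def using functor_comp[OF fQ fO] main by blast
qed

theorem mainTheorem11:
  fixes Op :: "('c, 'o) operad" and P :: "('d, 'p) operad"
    and Fc :: "'c \<Rightarrow> 'd" and Fo :: "'o \<Rightarrow> 'p"
    and A :: 'c and L :: "'o set"
  assumes "is_operad Op" and "is_operad P"
    and "A \<in> cols Op"
    and "regular_lang TYPE('qc \<times> 'qo) Op A L"
    and "is_finitary Op P Fc Fo" and "is_ULF Op P Fc Fo"
  shows "regular_lang TYPE('qc \<times> 'qo) P (Fc A) (Fo ` L)"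
proof -
  obtain Q :: "('qc, 'qo) operad" and pc po qr where
    n: "is_nfa Op Q pc po qr" and a: "pc qr = A" and l: "L = recognized Q po qr"
    using assms(4) unfolding regular_lang_def by blast
  have "is_nfa P Q (Fc \<circ> pc) (Fo \<circ> po) qr"
    using n finitary_comp[OF _ assms(5)] ULF_comp[OF _ assms(6)] unfolding is_nfa_def by blast
  moreover have "(Fc \<circ> pc) qr = Fc A" using a by simp
  moreover have "Fo ` L = recognized Q (Fo \<circ> po) qr" using l unfolding recognized_def by (simp add: image_comp)
  ultimately show ?thesis unfolding regular_lang_def by blast
qed

end
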